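(* Let $L$ be a complete lattice and $X$ a dcpo. There is a bijective correspondence between maps $f\colon L\to\mathcal{O}(X)$ preserving all joins and the top element and Scott continuous maps $g\colon X\to(L\setminus\{1\})^{\mathrm{op}}$, given by $$\overline{f}(x)=\bigvee\{a\in L: x\notin f(a)\},\qquad\overline{g}(a)=\{x\in X: a\not\le g(x)\};$$ in particular $\overline f(x)\ne 1$, $\overline f$ sends directed joins in $X$ to meets in $L$, and $\overline g(a)$ is Scott open with $\overline g(1)=X$. The monad on $\mathbf{Dcpo}$ induced by the resulting adjunction is isomorphic to the Hoare power domain $\mathcal{H}$, where $\mathcal{H}(X)$ is the set of non-empty Scott closed subsets of $X$ ordered by inclusion, $\mathcal{H}(f)(U)$ is the closure of $f(U)$, the unit is $x\mapsto{\downarrow}x$ and the multiplication is $A\mapsto\overline{\bigcup A}$ (closure of the union). Under this correspondence a Kleisli map $g\colon X\to\mathcal{H}(Y)$ corresponds to the predicate transformer $\mathcal{O}(Y)\to\mathcal{O}(X)$, $V\mapsto\{x: V\cap g(x)\ne\emptyset\}$.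
   Context: For a dcpo $X$, $\mathcal{O}(X)$ is the complete lattice of Scott open subsets (upsets $U$ such that any directed join in $U$ has some member of the directed set in $U$), ordered by inclusion; Scott closed sets are their complements; ${\downarrow}x=\{y:y\le x\}$. $(L\setminus\{1\})^{\mathrm{op}}$ is $L$ minus its top with reversed order, a dcpo with directed joins given by meets in $L$. $\mathbf{Dcpo}$ is the category of dcpos and Scott continuous maps. *)

theory Defs
  imports Main
begin

definition po_dual :: "('a \<Rightarrow> 'a \<Rightarrow> bool) \<Rightarrow> 'a \<Rightarrow> 'a \<Rightarrow> bool" where
  "po_dual le = (\<lambda>x y. le y x)"

definition is_poset :: "'a set \<Rightarrow> ('a \<Rightarrow> 'a \<Rightarrow> bool) \<Rightarrow> bool" where
  "is_poset P le \<longleftrightarrow> (\<forall>x\<in>P. le x x) \<and>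
     (\<forall>x\<in>P. \<forall>y\<in>P. le x y \<and> le y x \<longrightarrow> x = y) \<and>
     (\<forall>x\<in>P. \<forall>y\<in>P. \<forall>z\<in>P. le x y \<and> le y z \<longrightarrow> le x z)"

definition is_lub :: "'a set \<Rightarrow> ('a \<Rightarrow> 'a \<Rightarrow> bool) \<Rightarrow> 'a set \<Rightarrow> 'a \<Rightarrow> bool" where
  "is_lub P le A s \<longleftrightarrow> s \<in> P \<and> (\<forall>a\<in>A. le a s) \<and> (\<forall>u\<in>P. (\<forall>a\<in>A. le a u) \<longrightarrow> le s u)"

definition lub :: "'a set \<Rightarrow> ('a \<Rightarrow> 'a \<Rightarrow> bool) \<Rightarrow> 'a set \<Rightarrow> 'a" where
  "lub P le A = (THE s. is_lub P le A s)"

definition is_directed :: "'a set \<Rightarrow> ('a \<Rightarrow> 'a \<Rightarrow> bool) \<Rightarrow> 'a set \<Rightarrow> bool" where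
  "is_directed P le D \<longleftrightarrow> D \<subseteq> P \<and> D \<noteq> {} \<and> (\<forall>x\<in>D. \<forall>y\<in>D. \<exists>z\<in>D. le x z \<and> le y z)"

definition is_dcpo :: "'a set \<Rightarrow> ('a \<Rightarrow> 'a \<Rightarrow> bool) \<Rightarrow> bool" where
  "is_dcpo P le \<longleftrightarrow> is_poset P le \<and> (\<forall>D. is_directed P le D \<longrightarrow> (\<exists>s. is_lub P le D s))"

definition is_complete_lattice :: "'a set \<Rightarrow> ('a \<Rightarrow> 'a \<Rightarrow> bool) \<Rightarrow> bool" where
  "is_complete_lattice P le \<longleftrightarrow> is_poset P le \<and> (\<forall>A. A \<subseteq> P \<longrightarrow> (\<exists>s. is_lub P le A s))"

definition lat_top :: "'a set \<Rightarrow> ('a \<Rightarrow> 'a \<Rightarrow> bool) \<Rightarrow> 'a" where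
  "lat_top P le = lub P le P"

text \<open>Carrier of \<open>(L \ {1})^op\<close> (its order is \<open>po_dual le\<close>).\<close>
definition proper :: "'a set \<Rightarrow> ('a \<Rightarrow> 'a \<Rightarrow> bool) \<Rightarrow> 'a set" where
  "proper L le = L - {lat_top L le}"

definition scott_open :: "'a set \<Rightarrow> ('a \<Rightarrow> 'a \<Rightarrow> bool) \<Rightarrow> 'a set \<Rightarrow> bool" where
  "scott_open P le U \<longleftrightarrow> U \<subseteq> P \<and> (\<forall>x\<in>U. \<forall>y\<in>P. le x y \<longrightarrow> y \<in> U) \<and>
     (\<forall>D. is_directed P le D \<longrightarrow> lub P le D \<in> U \<longrightarrow> D \<inter> U \<noteq> {})"

definition opens :: "'a set \<Rightarrow> ('a \<Rightarrow> 'a \<Rightarrow> bool) \<Rightarrow> 'a set set" where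
  "opens P le = {U. scott_open P le U}"

definition scott_closed :: "'a set \<Rightarrow> ('a \<Rightarrow> 'a \<Rightarrow> bool) \<Rightarrow> 'a set \<Rightarrow> bool" where
  "scott_closed P le C \<longleftrightarrow> C \<subseteq> P \<and> scott_open P le (P - C)"

definition scott_cont :: "'a set \<Rightarrow> ('a \<Rightarrow> 'a \<Rightarrow> bool) \<Rightarrow> 'b set \<Rightarrow> ('b \<Rightarrow> 'b \<Rightarrow> bool)
     \<Rightarrow> ('a \<Rightarrow> 'b) \<Rightarrow> bool" where
  "scott_cont P le Q le' f \<longleftrightarrow> f ` P \<subseteq> Q \<and>
     (\<forall>D. is_directed P le D \<longrightarrow> is_lub Q le' (f ` D) (f (lub P le D)))"

definition join_top_map :: "'a set \<Rightarrow> ('a \<Rightarrow> 'a \<Rightarrow> bool) \<Rightarrow> 'b set \<Rightarrow> ('b \<Rightarrow> 'b \<Rightarrow> bool)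
     \<Rightarrow> ('a \<Rightarrow> 'b) \<Rightarrow> bool" where
  "join_top_map L le M le' f \<longleftrightarrow> f ` L \<subseteq> M \<and>
     (\<forall>A. A \<subseteq> L \<longrightarrow> f (lub L le A) = lub M le' (f ` A)) \<and>
     f (lat_top L le) = lat_top M le'"

definition fbar :: "'l set \<Rightarrow> ('l \<Rightarrow> 'l \<Rightarrow> bool) \<Rightarrow> ('l \<Rightarrow> 'a set) \<Rightarrow> 'a \<Rightarrow> 'l" where
  "fbar L le f x = lub L le {a \<in> L. x \<notin> f a}"

definition gbar :: "'a set \<Rightarrow> 'l set \<Rightarrow> ('l \<Rightarrow> 'l \<Rightarrow> bool) \<Rightarrow> ('a \<Rightarrow> 'l) \<Rightarrow> 'l \<Rightarrow> 'a set" where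
  "gbar X L le g a = {x \<in> X. \<not> le a (g x)}"

text \<open>Counit (as a map in the lattice category) \<open>L \<rightarrow> \<O>((L\{1})^op)\<close>: the
  correspondent of the identity of \<open>(L\{1})^op\<close>.\<close>
definition counit :: "'l set \<Rightarrow> ('l \<Rightarrow> 'l \<Rightarrow> bool) \<Rightarrow> 'l \<Rightarrow> 'l set" where
  "counit L le = gbar (proper L le) L le id"

text \<open>Right adjoint on morphisms: for a join/top preserving \<open>k : M \<rightarrow> L\<close>,
  \<open>G k : (L\{1})^op \<rightarrow> (M\{1})^op\<close> corresponds to \<open>counit L \<circ> k\<close>.\<close>
definition Gmap :: "'l set \<Rightarrow> ('l \<Rightarrow> 'l \<Rightarrow> bool) \<Rightarrow> 'm set \<Rightarrow> ('m \<Rightarrow> 'm \<Rightarrow> bool)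
     \<Rightarrow> ('m \<Rightarrow> 'l) \<Rightarrow> 'l \<Rightarrow> 'm" where
  "Gmap L le M le' k = fbar M le' (counit L le \<circ> k)"

text \<open>The induced monad \<open>T = G F\<close> on dcpos: \<open>T X = (\<O>(X)\{X})^op\<close>.\<close>
definition Tobj :: "'a set \<Rightarrow> ('a \<Rightarrow> 'a \<Rightarrow> bool) \<Rightarrow> 'a set set" where
  "Tobj X le = proper (opens X le) (\<subseteq>)"

definition Tord :: "'a set \<Rightarrow> 'a set \<Rightarrow> bool" where
  "Tord = po_dual (\<subseteq>)"

definition Tmap :: "'a set \<Rightarrow> ('a \<Rightarrow> 'a \<Rightarrow> bool) \<Rightarrow> 'b set \<Rightarrow> ('b \<Rightarrow> 'b \<Rightarrow> bool)
     \<Rightarrow> ('a \<Rightarrow> 'b) \<Rightarrow> 'a set \<Rightarrow> 'b set" where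
  "Tmap X le Y le' h = Gmap (opens X le) (\<subseteq>) (opens Y le') (\<subseteq>) (\<lambda>V. h -` V \<inter> X)"

definition Tunit :: "'a set \<Rightarrow> ('a \<Rightarrow> 'a \<Rightarrow> bool) \<Rightarrow> 'a \<Rightarrow> 'a set" where
  "Tunit X le = fbar (opens X le) (\<subseteq>) id"

definition Tmult :: "'a set \<Rightarrow> ('a \<Rightarrow> 'a \<Rightarrow> bool) \<Rightarrow> 'a set set \<Rightarrow> 'a set" where
  "Tmult X le = Gmap (opens (Tobj X le) Tord) (\<subseteq>) (opens X le) (\<subseteq>) (counit (opens X le) (\<subseteq>))"

definition scl :: "'a set \<Rightarrow> ('a \<Rightarrow> 'a \<Rightarrow> bool) \<Rightarrow> 'a set \<Rightarrow> 'a set" where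
  "scl X le A = \<Inter>{C. scott_closed X le C \<and> A \<subseteq> C}"

definition Hobj :: "'a set \<Rightarrow> ('a \<Rightarrow> 'a \<Rightarrow> bool) \<Rightarrow> 'a set set" where
  "Hobj X le = {C. scott_closed X le C \<and> C \<noteq> {}}"

definition Hmap :: "'b set \<Rightarrow> ('b \<Rightarrow> 'b \<Rightarrow> bool) \<Rightarrow> ('a \<Rightarrow> 'b) \<Rightarrow> 'a set \<Rightarrow> 'b set" where
  "Hmap Y le' h C = scl Y le' (h ` C)"

definition Hunit :: "'a set \<Rightarrow> ('a \<Rightarrow> 'a \<Rightarrow> bool) \<Rightarrow> 'a \<Rightarrow> 'a set" where
  "Hunit X le x = {y \<in> X. le y x}"

definition Hmult :: "'a set \<Rightarrow> ('a \<Rightarrow> 'a \<Rightarrow> bool) \<Rightarrow> 'a set set \<Rightarrow> 'a set" where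
  "Hmult X le A = scl X le (\<Union>A)"

text \<open>The monad isomorphism \<open>T X \<rightarrow> \<H> X\<close>, \<open>U \<mapsto> X - U\<close>.\<close>
definition theta :: "'a set \<Rightarrow> 'a set \<Rightarrow> 'a set" where
  "theta X U = X - U"

end

theory Submission
  imports Defs
begin


lemma lub_eq: "is_poset P le \<Longrightarrow> is_lub P le A s \<Longrightarrow> lub P le A = s"
  unfolding lub_def by (rule the_equality) (auto simp: is_lub_def is_poset_def)

lemma lub_subset_eq: "is_lub P (\<subseteq>) A s \<Longrightarrow> lub P (\<subseteq>) A = s"
  unfolding lub_def by (rule the_equality) (auto simp: is_lub_def)

lemma cl_lub: "is_complete_lattice L le \<Longrightarrow> A \<subseteq> L \<Longrightarrow> is_lub L le A (lub L le A)"
  unfolding is_complete_lattice_def using lub_eq by metis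

lemma open_Union: "B \<subseteq> opens X le \<Longrightarrow> \<Union>B \<in> opens X le"
  unfolding opens_def scott_open_def by blast

lemma lub_opens: "B \<subseteq> opens X le \<Longrightarrow> lub (opens X le) (\<subseteq>) B = \<Union>B"
  apply (rule lub_subset_eq)
  using open_Union unfolding is_lub_def by blast

lemma X_open: "X \<in> opens X le"
  unfolding opens_def scott_open_def is_directed_def by auto

lemma opens_sub: "U \<in> opens X le \<Longrightarrow> U \<subseteq> X"
  unfolding opens_def scott_open_def by auto

lemma top_opens: "lat_top (opens X le) (\<subseteq>) = X"
  unfolding lat_top_def using lub_opens[of "opens X le" X le] X_open opens_sub by blast

lemma top_L: "is_complete_lattice L le \<Longrightarrow> lat_top L le \<in> L \<and> (\<forall>a\<in>L. le a (lat_top L le))"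
  unfolding lat_top_def using cl_lub[of L le L] unfolding is_lub_def by auto

lemma top_unique: "is_complete_lattice L le \<Longrightarrow> a \<in> L \<Longrightarrow> le (lat_top L le) a \<Longrightarrow> a = lat_top L le"
  using top_L[of L le] unfolding is_complete_lattice_def is_poset_def by blast

lemma counit_eq: "counit L le b = {y \<in> proper L le. \<not> le b y}"
  by (simp add: counit_def gbar_def)

lemma proper_eq: "is_complete_lattice L le \<Longrightarrow> y \<in> proper L le \<longleftrightarrow> y \<in> L \<and> \<not> le (lat_top L le) y"
  unfolding proper_def using top_L[of L le] top_unique[of L le] by auto

lemma Tobj_eq: "Tobj X le = opens X le - {X}"
  unfolding Tobj_def proper_def top_opens by simp

lemma jtm_in: "join_top_map L leL (opens X le) (\<subseteq>) f \<Longrightarrow> a \<in> L \<Longrightarrow> f a \<in> opens X le"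
  unfolding join_top_map_def by auto

lemma jtm_lub: "join_top_map L leL (opens X le) (\<subseteq>) f \<Longrightarrow> A \<subseteq> L \<Longrightarrow> f (lub L leL A) = \<Union>(f ` A)"
  unfolding join_top_map_def using lub_opens by (metis image_subset_iff subset_iff)

lemma jtm_top: "join_top_map L leL (opens X le) (\<subseteq>) f \<Longrightarrow> f (lat_top L leL) = X"
  unfolding join_top_map_def top_opens by simp

lemma jtm_mono:
  assumes L: "is_complete_lattice L leL" and J: "join_top_map L leL (opens X le) (\<subseteq>) f"
    and a: "a \<in> L" "b \<in> L" "leL a b"
  shows "f a \<subseteq> f b"
proof -
  have "lub L leL {a,b} = b"
  proof (rule lub_eq)
    show "is_poset L leL" using L unfolding is_complete_lattice_def by blast
    then have "leL b b" using a unfolding is_poset_def by blast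
    then show "is_lub L leL {a,b} b" using a unfolding is_lub_def by blast
  qed
  then have "f b = f a \<union> f b" using jtm_lub[OF J, of "{a,b}"] a by auto
  then show ?thesis by blast
qed

lemma fbar_char:
  assumes L: "is_complete_lattice L leL" and J: "join_top_map L leL (opens X le) (\<subseteq>) f"
    and x: "x \<in> X" and a: "a \<in> L"
  shows "leL a (fbar L leL f x) \<longleftrightarrow> x \<notin> f a"
proof -
  let ?S = "{a\<in>L. x \<notin> f a}"
  have lS: "is_lub L leL ?S (fbar L leL f x)" unfolding fbar_def by (rule cl_lub[OF L]) auto
  have "f (fbar L leL f x) = \<Union>(f ` ?S)" unfolding fbar_def by (rule jtm_lub[OF J]) auto
  then have nx: "x \<notin> f (fbar L leL f x)" by auto
  show ?thesis
  proof
    assume "leL a (fbar L leL f x)"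
    then have "f a \<subseteq> f (fbar L leL f x)" using jtm_mono[OF L J a] lS unfolding is_lub_def by blast
    then show "x \<notin> f a" using nx by blast
  next
    assume "x \<notin> f a" then show "leL a (fbar L leL f x)" using lS a unfolding is_lub_def by blast
  qed
qed

lemma fbar_proper:
  assumes L: "is_complete_lattice L leL" and J: "join_top_map L leL (opens X le) (\<subseteq>) f"
    and x: "x \<in> X"
  shows "fbar L leL f x \<in> proper L leL"
proof -
  have "is_lub L leL {a\<in>L. x \<notin> f a} (fbar L leL f x)" unfolding fbar_def by (rule cl_lub[OF L]) auto
  then have "fbar L leL f x \<in> L" unfolding is_lub_def by blast
  moreover have "x \<in> f (lat_top L leL)" using jtm_top[OF J] x by simp
  then have "\<not> leL (lat_top L leL) (fbar L leL f x)"
    using fbar_char[OF L J x, of "lat_top L leL"] top_L[OF L] by blast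
  ultimately show ?thesis using proper_eq[OF L] by auto
qed

lemma dcpo_lub: "is_dcpo X le \<Longrightarrow> is_directed X le D \<Longrightarrow> is_lub X le D (lub X le D)"
  unfolding is_dcpo_def using lub_eq by metis

lemma fbar_cont:
  assumes L: "is_complete_lattice L leL" and X: "is_dcpo X le"
    and J: "join_top_map L leL (opens X le) (\<subseteq>) f"
  shows "scott_cont X le (proper L leL) (po_dual leL) (fbar L leL f)"
  unfolding scott_cont_def
proof (intro conjI allI impI)
  show "fbar L leL f ` X \<subseteq> proper L leL" using fbar_proper[OF L J] by blast
next
  fix D assume D: "is_directed X le D"
  let ?s = "lub X le D"
  have ls: "is_lub X le D ?s" by (rule dcpo_lub[OF X D])
  have sX: "?s \<in> X" using ls unfolding is_lub_def by blast
  have DX: "D \<subseteq> X" using D unfolding is_directed_def by blast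
  have pL: "proper L leL \<subseteq> L" unfolding proper_def by blast
  have fs: "fbar L leL f ?s \<in> proper L leL" by (rule fbar_proper[OF L J sX])
  then have fsL: "fbar L leL f ?s \<in> L" using pL by blast
  have refl: "leL (fbar L leL f ?s) (fbar L leL f ?s)" using L fsL
    unfolding is_complete_lattice_def is_poset_def by blast
  have nx: "?s \<notin> f (fbar L leL f ?s)" using fbar_char[OF L J sX fsL] refl by blast
  have op: "scott_open X le (f (fbar L leL f ?s))" using jtm_in[OF J fsL] unfolding opens_def by blast
  have ub: "\<forall>d\<in>D. leL (fbar L leL f ?s) (fbar L leL f d)"
  proof
    fix d assume d: "d \<in> D"
    have "le d ?s" using ls d unfolding is_lub_def by blast
    then have "d \<notin> f (fbar L leL f ?s)" using op nx sX unfolding scott_open_def by blast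
    then show "leL (fbar L leL f ?s) (fbar L leL f d)" using fbar_char[OF L J _ fsL] d DX by blast
  qed
  have least: "\<forall>u\<in>proper L leL. (\<forall>d\<in>D. leL u (fbar L leL f d)) \<longrightarrow> leL u (fbar L leL f ?s)"
  proof (intro ballI impI)
    fix u assume u: "u \<in> proper L leL" and h: "\<forall>d\<in>D. leL u (fbar L leL f d)"
    have uL: "u \<in> L" using u pL by blast
    have "\<forall>d\<in>D. d \<notin> f u" using h fbar_char[OF L J _ uL] DX by blast
    moreover have "scott_open X le (f u)" using jtm_in[OF J uL] unfolding opens_def by blast
    ultimately have "?s \<notin> f u" using D unfolding scott_open_def by blast
    then show "leL u (fbar L leL f ?s)" using fbar_char[OF L J sX uL] by blast
  qed
  show "is_lub (proper L leL) (po_dual leL) (fbar L leL f ` D) (fbar L leL f ?s)"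
    unfolding is_lub_def po_dual_def using fs ub least by blast
qed

lemma gbar_fbar:
  assumes L: "is_complete_lattice L leL" and J: "join_top_map L leL (opens X le) (\<subseteq>) f"
    and a: "a \<in> L"
  shows "gbar X L leL (fbar L leL f) a = f a"
proof -
  have "f a \<subseteq> X" using jtm_in[OF J a] opens_sub by blast
  then show ?thesis unfolding gbar_def using fbar_char[OF L J _ a] by blast
qed

lemma cont_mono:
  assumes X: "is_dcpo X le" and g: "scott_cont X le Q le' g"
    and xy: "x \<in> X" "y \<in> X" "le x y"
  shows "le' (g x) (g y)"
proof -
  have P: "is_poset X le" using X unfolding is_dcpo_def by blast
  then have yy: "le y y" using xy unfolding is_poset_def by blast
  have D: "is_directed X le {x,y}" unfolding is_directed_def using xy yy by blast
  have "lub X le {x,y} = y" apply (rule lub_eq[OF P]) unfolding is_lub_def using xy yy by blast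
  then have "is_lub Q le' (g ` {x,y}) (g y)" using g D unfolding scott_cont_def by metis
  then show ?thesis unfolding is_lub_def by blast
qed

lemma gbar_open:
  assumes L: "is_complete_lattice L leL" and X: "is_dcpo X le"
    and g: "scott_cont X le (proper L leL) (po_dual leL) g" and a: "a \<in> L"
  shows "gbar X L leL g a \<in> opens X le"
proof -
  have P: "is_poset L leL" using L unfolding is_complete_lattice_def by blast
  have gX: "\<And>x. x \<in> X \<Longrightarrow> g x \<in> proper L leL" using g unfolding scott_cont_def by blast
  have pL: "proper L leL \<subseteq> L" unfolding proper_def by blast
  have up: "\<forall>x\<in>gbar X L leL g a. \<forall>y\<in>X. le x y \<longrightarrow> y \<in> gbar X L leL g a"
  proof (intro ballI impI)
    fix x y assume x: "x \<in> gbar X L leL g a" and y: "y \<in> X" and xy: "le x y"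
    have xX: "x \<in> X" and na: "\<not> leL a (g x)" using x unfolding gbar_def by auto
    have "po_dual leL (g x) (g y)" by (rule cont_mono[OF X g xX y xy])
    then have gyx: "leL (g y) (g x)" unfolding po_dual_def .
    have "\<not> leL a (g y)"
    proof
      assume "leL a (g y)"
      then have "leL a (g x)" using P gyx a gX[OF xX] gX[OF y] pL unfolding is_poset_def by blast
      then show False using na by blast
    qed
    then show "y \<in> gbar X L leL g a" using y unfolding gbar_def by blast
  qed
  have dir: "\<forall>D. is_directed X le D \<longrightarrow> lub X le D \<in> gbar X L leL g a \<longrightarrow> D \<inter> gbar X L leL g a \<noteq> {}"
  proof (intro allI impI)
    fix D assume D: "is_directed X le D" and s: "lub X le D \<in> gbar X L leL g a"
    have DX: "D \<subseteq> X" using D unfolding is_directed_def by blast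
    have ns: "\<not> leL a (g (lub X le D))" using s unfolding gbar_def by blast
    have lu: "is_lub (proper L leL) (po_dual leL) (g ` D) (g (lub X le D))"
      using g D unfolding scott_cont_def by blast
    show "D \<inter> gbar X L leL g a \<noteq> {}"
    proof
      assume e: "D \<inter> gbar X L leL g a = {}"
      then have all: "\<forall>d\<in>D. leL a (g d)" using DX unfolding gbar_def by blast
      show False
      proof (cases "a = lat_top L leL")
        case True
        obtain d where d: "d \<in> D" using D unfolding is_directed_def by blast
        then have "leL (lat_top L leL) (g d)" using all True by blast
        then show False using proper_eq[OF L] gX d DX by blast
      next
        case False
        then have "a \<in> proper L leL" using a unfolding proper_def by blast
        then have "leL a (g (lub X le D))" using lu all unfolding is_lub_def po_dual_def by blast
        then show False using ns by blast
      qed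
    qed
  qed
  show ?thesis unfolding opens_def scott_open_def using up dir unfolding gbar_def by blast
qed

lemma gbar_jtm:
  assumes L: "is_complete_lattice L leL" and X: "is_dcpo X le"
    and g: "scott_cont X le (proper L leL) (po_dual leL) g"
  shows "join_top_map L leL (opens X le) (\<subseteq>) (gbar X L leL g)"
  unfolding join_top_map_def
proof (intro conjI allI impI)
  show "gbar X L leL g ` L \<subseteq> opens X le" using gbar_open[OF L X g] by blast
next
  have P: "is_poset L leL" using L unfolding is_complete_lattice_def by blast
  have gX: "\<And>x. x \<in> X \<Longrightarrow> g x \<in> proper L leL" using g unfolding scott_cont_def by blast
  have pL: "proper L leL \<subseteq> L" unfolding proper_def by blast
  fix A assume A: "A \<subseteq> L"
  have lA: "is_lub L leL A (lub L leL A)" by (rule cl_lub[OF L A])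
  have "gbar X L leL g (lub L leL A) = \<Union>(gbar X L leL g ` A)"
  proof (rule set_eqI)
    fix x
    show "x \<in> gbar X L leL g (lub L leL A) \<longleftrightarrow> x \<in> \<Union>(gbar X L leL g ` A)"
    proof (cases "x \<in> X")
      case True
      then have gxL: "g x \<in> L" using gX pL by blast
      have "leL (lub L leL A) (g x) \<longleftrightarrow> (\<forall>a\<in>A. leL a (g x))"
      proof
        assume h: "leL (lub L leL A) (g x)"
        show "\<forall>a\<in>A. leL a (g x)"
        proof
          fix a assume "a \<in> A"
          then show "leL a (g x)" using h lA P A gxL unfolding is_lub_def is_poset_def by blast
        qed
      next
        assume "\<forall>a\<in>A. leL a (g x)"
        then show "leL (lub L leL A) (g x)" using lA gxL unfolding is_lub_def by blast
      qed
      then show ?thesis using True unfolding gbar_def by blast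
    next
      case False
      then show ?thesis unfolding gbar_def by blast
    qed
  qed
  moreover have "gbar X L leL g ` A \<subseteq> opens X le" using gbar_open[OF L X g] A by blast
  ultimately show "gbar X L leL g (lub L leL A) = lub (opens X le) (\<subseteq>) (gbar X L leL g ` A)"
    using lub_opens by metis
next
  have gX: "\<And>x. x \<in> X \<Longrightarrow> g x \<in> proper L leL" using g unfolding scott_cont_def by blast
  have "gbar X L leL g (lat_top L leL) = X"
    unfolding gbar_def using gX proper_eq[OF L] by blast
  then show "gbar X L leL g (lat_top L leL) = lat_top (opens X le) (\<subseteq>)" using top_opens by metis
qed

lemma fbar_gbar:
  assumes L: "is_complete_lattice L leL"
    and g: "scott_cont X le (proper L leL) (po_dual leL) g" and x: "x \<in> X"
  shows "fbar L leL (gbar X L leL g) x = g x"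
proof -
  have P: "is_poset L leL" using L unfolding is_complete_lattice_def by blast
  have gx: "g x \<in> L" using g x unfolding scott_cont_def proper_def by blast
  have "{a \<in> L. x \<notin> gbar X L leL g a} = {a \<in> L. leL a (g x)}" using x unfolding gbar_def by blast
  moreover have "is_lub L leL {a \<in> L. leL a (g x)} (g x)"
    using gx P unfolding is_lub_def is_poset_def by blast
  ultimately show ?thesis unfolding fbar_def using lub_eq[OF P] by metis
qed

lemma nat_dcpo:
  "\<forall>x\<in>X'. fbar L leL (\<lambda>a. h -` f a \<inter> X') x = fbar L leL f (h x)"
proof
  fix x assume "x \<in> X'"
  then have "{a \<in> L. x \<notin> h -` f a \<inter> X'} = {a \<in> L. h x \<notin> f a}" by blast
  then show "fbar L leL (\<lambda>a. h -` f a \<inter> X') x = fbar L leL f (h x)" unfolding fbar_def by simp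
qed

lemma nat_lat:
  assumes L: "is_complete_lattice L leL" and J: "join_top_map L leL (opens X le) (\<subseteq>) f"
    and k: "join_top_map M leM L leL k" and x: "x \<in> X"
  shows "fbar M leM (f \<circ> k) x = Gmap L leL M leM k (fbar L leL f x)"
proof -
  have kL: "\<And>m. m \<in> M \<Longrightarrow> k m \<in> L" using k unfolding join_top_map_def by blast
  have fp: "fbar L leL f x \<in> proper L leL" by (rule fbar_proper[OF L J x])
  have "{m \<in> M. x \<notin> (f \<circ> k) m} = {m \<in> M. fbar L leL f x \<notin> (counit L leL \<circ> k) m}"
    using fbar_char[OF L J x] kL fp unfolding counit_eq comp_def by blast
  then show ?thesis unfolding Gmap_def fbar_def by simp
qed

lemma empty_open: "{} \<in> opens X le"
  unfolding opens_def scott_open_def by blast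

lemma scl_compl:
  assumes A: "A \<subseteq> Y"
  shows "Y - scl Y le A = \<Union>{V \<in> opens Y le. V \<inter> A = {}}"
proof (rule set_eqI)
  fix y
  show "y \<in> Y - scl Y le A \<longleftrightarrow> y \<in> \<Union>{V \<in> opens Y le. V \<inter> A = {}}"
  proof
    assume "y \<in> Y - scl Y le A"
    then obtain C where C: "scott_closed Y le C" "A \<subseteq> C" "y \<notin> C" "y \<in> Y" unfolding scl_def by blast
    then have "Y - C \<in> opens Y le" unfolding scott_closed_def opens_def by blast
    then show "y \<in> \<Union>{V \<in> opens Y le. V \<inter> A = {}}" using C by blast
  next
    assume "y \<in> \<Union>{V \<in> opens Y le. V \<inter> A = {}}"
    then obtain V where V: "V \<in> opens Y le" "V \<inter> A = {}" "y \<in> V" by blast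
    have VY: "V \<subseteq> Y" using V opens_sub by blast
    have "Y - (Y - V) = V" using VY by blast
    then have "scott_closed Y le (Y - V)" using V unfolding scott_closed_def opens_def by auto
    moreover have "A \<subseteq> Y - V" using A V by blast
    ultimately show "y \<in> Y - scl Y le A" using V VY unfolding scl_def by blast
  qed
qed

lemma Y_closed: "scott_closed Y le Y"
  unfolding scott_closed_def using empty_open[of Y le] unfolding opens_def by simp

lemma scl_sub: "A \<subseteq> Y \<Longrightarrow> scl Y le A \<subseteq> Y"
  unfolding scl_def using Y_closed by blast

lemma scl_eq: "A \<subseteq> Y \<Longrightarrow> scl Y le A = Y - \<Union>{V \<in> opens Y le. V \<inter> A = {}}"
  using scl_compl[of A Y le] scl_sub[of A Y le] by blast

lemma scl_closed: "A \<subseteq> Y \<Longrightarrow> scott_closed Y le (scl Y le A)"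
proof -
  assume A: "A \<subseteq> Y"
  have "Y - scl Y le A \<in> opens Y le" unfolding scl_compl[OF A] by (rule open_Union) blast
  then show ?thesis unfolding scott_closed_def opens_def using scl_sub[OF A] by blast
qed

lemma scl_ext: "A \<subseteq> scl Y le A"
  unfolding scl_def by blast

lemma scl_least: "scott_closed Y le K \<Longrightarrow> A \<subseteq> K \<Longrightarrow> scl Y le A \<subseteq> K"
  unfolding scl_def by blast

lemma scl_mono: "A \<subseteq> B \<Longrightarrow> scl Y le A \<subseteq> scl Y le B"
  unfolding scl_def by blast

lemma closed_iff: "scott_closed X le C \<longleftrightarrow> C \<subseteq> X \<and> X - C \<in> opens X le"
  unfolding scott_closed_def opens_def by blast

lemma theta_bij: "bij_betw (theta X) (Tobj X le) (Hobj X le)"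
proof (rule bij_betw_byWitness[where f' = "theta X"])
  show "\<forall>a\<in>Tobj X le. theta X (theta X a) = a" unfolding Tobj_eq theta_def using opens_sub by blast
  show "\<forall>a'\<in>Hobj X le. theta X (theta X a') = a'" unfolding Hobj_def theta_def scott_closed_def by blast
  show "theta X ` Tobj X le \<subseteq> Hobj X le"
  proof
    fix C assume "C \<in> theta X ` Tobj X le"
    then obtain U where U: "U \<in> opens X le" "U \<noteq> X" "C = X - U" unfolding Tobj_eq theta_def by blast
    have "X - (X - U) = U" using opens_sub[OF U(1)] by blast
    then show "C \<in> Hobj X le" using U opens_sub[OF U(1)] unfolding Hobj_def closed_iff by auto
  qed
  show "theta X ` Hobj X le \<subseteq> Tobj X le"
  proof
    fix U assume "U \<in> theta X ` Hobj X le"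
    then obtain C where C: "scott_closed X le C" "C \<noteq> {}" "U = X - C" unfolding Hobj_def theta_def by blast
    then show "U \<in> Tobj X le" unfolding Tobj_eq closed_iff by blast
  qed
qed

lemma Tord_iff: "\<forall>U\<in>Tobj X le. \<forall>V\<in>Tobj X le. Tord U V \<longleftrightarrow> theta X U \<subseteq> theta X V"
  unfolding Tord_def po_dual_def theta_def Tobj_eq using opens_sub by blast

lemma Tmap_eq:
  assumes U: "U \<in> Tobj X le"
  shows "Tmap X le Y leY h U = \<Union>{V \<in> opens Y leY. h -` V \<inter> X \<subseteq> U}"
proof -
  have "{V \<in> opens Y leY. U \<notin> (counit (opens X le) (\<subseteq>) \<circ> (\<lambda>V. h -` V \<inter> X)) V}
        = {V \<in> opens Y leY. h -` V \<inter> X \<subseteq> U}"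
    using U unfolding counit_eq comp_def Tobj_def by blast
  then show ?thesis unfolding Tmap_def Gmap_def fbar_def using lub_opens
    by (metis (no_types, lifting) mem_Collect_eq subsetI)
qed

lemma Tmap_thm:
  assumes h: "scott_cont X le Y leY h" and U: "U \<in> Tobj X le"
  shows "theta Y (Tmap X le Y leY h U) = Hmap Y leY h (theta X U)"
proof -
  have hY: "h ` (X - U) \<subseteq> Y" using h unfolding scott_cont_def by blast
  have "{V \<in> opens Y leY. h -` V \<inter> X \<subseteq> U} = {V \<in> opens Y leY. V \<inter> h ` (X - U) = {}}" by blast
  then show ?thesis unfolding Tmap_eq[OF U] theta_def Hmap_def scl_eq[OF hY] by simp
qed

lemma Tunit_thm:
  assumes X: "is_dcpo X le" and x: "x \<in> X"
  shows "theta X (Tunit X le x) = Hunit X le x"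
proof -
  have P: "is_poset X le" using X unfolding is_dcpo_def by blast
  have "Tunit X le x = \<Union>{U \<in> opens X le. x \<notin> U}"
    unfolding Tunit_def fbar_def id_def using lub_opens
    by (metis (no_types, lifting) mem_Collect_eq subsetI)
  moreover have "X - \<Union>{U \<in> opens X le. x \<notin> U} = {y \<in> X. le y x}"
  proof (rule set_eqI)
    fix y
    show "y \<in> X - \<Union>{U \<in> opens X le. x \<notin> U} \<longleftrightarrow> y \<in> {y \<in> X. le y x}"
    proof
      assume y: "y \<in> X - \<Union>{U \<in> opens X le. x \<notin> U}"
      let ?U = "X - {z \<in> X. le z x}"
      have "scott_open X le ?U"
        unfolding scott_open_def
      proof (intro conjI allI impI ballI)
        show "?U \<subseteq> X" by blast
      next
        fix a b assume a: "a \<in> ?U" and b: "b \<in> X" and ab: "le a b"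
        show "b \<in> ?U"
        proof (rule ccontr)
          assume "b \<notin> ?U"
          then have "le b x" using b by blast
          then have "le a x" using P a b ab x unfolding is_poset_def by blast
          then show False using a by blast
        qed
      next
        fix D assume D: "is_directed X le D" and s: "lub X le D \<in> ?U"
        show "D \<inter> ?U \<noteq> {}"
        proof
          assume "D \<inter> ?U = {}"
          then have "\<forall>d\<in>D. le d x" using D unfolding is_directed_def by blast
          then have "le (lub X le D) x" using dcpo_lub[OF X D] x unfolding is_lub_def by blast
          then show False using s by blast
        qed
      qed
      then have "?U \<in> opens X le" unfolding opens_def by blast
      moreover have "x \<notin> ?U" using P x unfolding is_poset_def by blast
      ultimately show "y \<in> {y \<in> X. le y x}" using y by blast
    next
      assume y: "y \<in> {y \<in> X. le y x}"
      {
        fix U assume U: "U \<in> opens X le" "y \<in> U"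
        then have "x \<in> U" using y x unfolding opens_def scott_open_def by blast
      }
      then show "y \<in> X - \<Union>{U \<in> opens X le. x \<notin> U}" using y by blast
    qed
  qed
  ultimately show ?thesis unfolding theta_def Hunit_def by simp
qed

lemma kleisli_thm:
  "\<forall>V\<in>opens Y leY. gbar X (opens Y leY) (\<subseteq>) (\<lambda>x. theta Y (g x)) V = {x \<in> X. V \<inter> g x \<noteq> {}}"
  unfolding gbar_def theta_def using opens_sub by blast

lemma Tmult_eq:
  assumes U: "\<U> \<in> Tobj (Tobj X le) Tord"
  shows "Tmult X le \<U> = \<Union>{V \<in> opens X le. {W \<in> Tobj X le. \<not> V \<subseteq> W} \<subseteq> \<U>}"
proof -
  have "{V \<in> opens X le. \<U> \<notin> (counit (opens (Tobj X le) Tord) (\<subseteq>) \<circ> counit (opens X le) (\<subseteq>)) V}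
      = {V \<in> opens X le. {W \<in> Tobj X le. \<not> V \<subseteq> W} \<subseteq> \<U>}"
    using U unfolding counit_eq comp_def Tobj_def[of "Tobj X le" Tord]
    unfolding Tobj_def[of X le, symmetric] by blast
  then show ?thesis unfolding Tmult_def Gmap_def fbar_def using lub_opens
    by (metis (no_types, lifting) mem_Collect_eq subsetI)
qed

lemma Hlub:
  assumes D: "\<D> \<subseteq> Hobj X le" "\<D> \<noteq> {}"
  shows "is_lub (Hobj X le) (\<subseteq>) \<D> (scl X le (\<Union>\<D>))"
proof -
  have sub: "\<Union>\<D> \<subseteq> X" using D unfolding Hobj_def scott_closed_def by blast
  have ne: "\<Union>\<D> \<noteq> {}" using D unfolding Hobj_def by blast
  have "scl X le (\<Union>\<D>) \<in> Hobj X le" using scl_closed[OF sub] scl_ext[of "\<Union>\<D>" X le] ne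
    unfolding Hobj_def by blast
  moreover have "\<forall>a\<in>\<D>. a \<subseteq> scl X le (\<Union>\<D>)" using scl_ext[of "\<Union>\<D>" X le] by blast
  moreover have "\<forall>u\<in>Hobj X le. (\<forall>a\<in>\<D>. a \<subseteq> u) \<longrightarrow> scl X le (\<Union>\<D>) \<subseteq> u"
  proof (intro ballI impI)
    fix u assume "u \<in> Hobj X le" "\<forall>a\<in>\<D>. a \<subseteq> u"
    then show "scl X le (\<Union>\<D>) \<subseteq> u" using scl_least[of X le u "\<Union>\<D>"] unfolding Hobj_def by blast
  qed
  ultimately show ?thesis unfolding is_lub_def by blast
qed

lemma down_closed:
  assumes K: "scott_closed X le K"
  shows "scott_closed (Hobj X le) (\<subseteq>) {C \<in> Hobj X le. C \<subseteq> K}"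
  unfolding scott_closed_def scott_open_def
proof (intro conjI allI impI ballI)
  show "{C \<in> Hobj X le. C \<subseteq> K} \<subseteq> Hobj X le" by blast
  show "Hobj X le - {C \<in> Hobj X le. C \<subseteq> K} \<subseteq> Hobj X le" by blast
next
  fix x y assume "x \<in> Hobj X le - {C \<in> Hobj X le. C \<subseteq> K}" "y \<in> Hobj X le" "x \<subseteq> y"
  then show "y \<in> Hobj X le - {C \<in> Hobj X le. C \<subseteq> K}" by blast
next
  fix \<D> assume D: "is_directed (Hobj X le) (\<subseteq>) \<D>"
    and l: "lub (Hobj X le) (\<subseteq>) \<D> \<in> Hobj X le - {C \<in> Hobj X le. C \<subseteq> K}"
  have D1: "\<D> \<subseteq> Hobj X le" "\<D> \<noteq> {}" using D unfolding is_directed_def by auto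
  have eq: "lub (Hobj X le) (\<subseteq>) \<D> = scl X le (\<Union>\<D>)" by (rule lub_subset_eq[OF Hlub[OF D1]])
  show "\<D> \<inter> (Hobj X le - {C \<in> Hobj X le. C \<subseteq> K}) \<noteq> {}"
  proof
    assume "\<D> \<inter> (Hobj X le - {C \<in> Hobj X le. C \<subseteq> K}) = {}"
    then have "\<Union>\<D> \<subseteq> K" using D1 by blast
    then have "scl X le (\<Union>\<D>) \<subseteq> K" by (rule scl_least[OF K])
    then show False using l eq by blast
  qed
qed

lemma Tmult_thm:
  assumes U: "\<U> \<in> Tobj (Tobj X le) Tord"
  shows "theta X (Tmult X le \<U>) = Hmult X le (Hmap (Hobj X le) (\<subseteq>) (theta X) (theta (Tobj X le) \<U>))"
proof -
  have UT: "\<U> \<subseteq> Tobj X le" using U opens_sub unfolding Tobj_def[of "Tobj X le"] proper_def by blast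
  define \<C> where "\<C> = theta X ` (Tobj X le - \<U>)"
  have CH: "\<C> \<subseteq> Hobj X le" unfolding \<C>_def using theta_bij[of X le] unfolding bij_betw_def by blast
  have CX: "\<Union>\<C> \<subseteq> X" using CH unfolding Hobj_def scott_closed_def by blast
  define K where "K = scl X le (\<Union>\<C>)"
  have K: "scott_closed X le K" unfolding K_def by (rule scl_closed[OF CX])
  have "\<C> \<subseteq> {C \<in> Hobj X le. C \<subseteq> K}" using CH scl_ext[of "\<Union>\<C>" X le] unfolding K_def by blast
  then have "scl (Hobj X le) (\<subseteq>) \<C> \<subseteq> {C \<in> Hobj X le. C \<subseteq> K}" by (rule scl_least[OF down_closed[OF K]])
  then have "\<Union>(scl (Hobj X le) (\<subseteq>) \<C>) \<subseteq> K" by blast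
  then have 1: "scl X le (\<Union>(scl (Hobj X le) (\<subseteq>) \<C>)) \<subseteq> K" by (rule scl_least[OF K])
  have "\<Union>\<C> \<subseteq> \<Union>(scl (Hobj X le) (\<subseteq>) \<C>)" using scl_ext[of \<C> "Hobj X le" "(\<subseteq>)"] by blast
  then have 2: "K \<subseteq> scl X le (\<Union>(scl (Hobj X le) (\<subseteq>) \<C>))" unfolding K_def by (rule scl_mono)
  have R: "Hmult X le (Hmap (Hobj X le) (\<subseteq>) (theta X) (theta (Tobj X le) \<U>)) = K"
    unfolding Hmult_def Hmap_def using 1 2 unfolding \<C>_def theta_def[of "Tobj X le"] by blast
  have "{V \<in> opens X le. V \<inter> \<Union>\<C> = {}} = {V \<in> opens X le. {W \<in> Tobj X le. \<not> V \<subseteq> W} \<subseteq> \<U>}"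
    unfolding \<C>_def theta_def using opens_sub by blast
  then have "theta X (Tmult X le \<U>) = K" unfolding K_def scl_eq[OF CX] Tmult_eq[OF U] theta_def by simp
  then show ?thesis using R by simp
qed


theorem mainTheorem9:
  fixes L :: "'l set" and leL :: "'l \<Rightarrow> 'l \<Rightarrow> bool"
    and X :: "'a set" and le :: "'a \<Rightarrow> 'a \<Rightarrow> bool"
  assumes L: "is_complete_lattice L leL"
    and X: "is_dcpo X le"
  shows
    \<comment> \<open>the bijective correspondence\<close>
    "(\<forall>f. join_top_map L leL (opens X le) (\<subseteq>) f \<longrightarrow>
          scott_cont X le (proper L leL) (po_dual leL) (fbar L leL f) \<and>
          (\<forall>a\<in>L. gbar X L leL (fbar L leL f) a = f a))
     \<and> (\<forall>g. scott_cont X le (proper L leL) (po_dual leL) g \<longrightarrow>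
          join_top_map L leL (opens X le) (\<subseteq>) (gbar X L leL g) \<and>
          (\<forall>x\<in>X. fbar L leL (gbar X L leL g) x = g x))
     \<comment> \<open>naturality in the dcpo\<close>
     \<and> (\<forall>(X' :: 'b set) le' (h :: 'b \<Rightarrow> 'a) f. is_dcpo X' le' \<longrightarrow> scott_cont X' le' X le h \<longrightarrow>
          join_top_map L leL (opens X le) (\<subseteq>) f \<longrightarrow>
          (\<forall>x\<in>X'. fbar L leL (\<lambda>a. h -` f a \<inter> X') x = fbar L leL f (h x)))
     \<comment> \<open>naturality in the lattice\<close>
     \<and> (\<forall>(M :: 'm set) leM (k :: 'm \<Rightarrow> 'l) f. is_complete_lattice M leM \<longrightarrow>
          join_top_map M leM L leL k \<longrightarrow> join_top_map L leL (opens X le) (\<subseteq>) f \<longrightarrow>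
          (\<forall>x\<in>X. fbar M leM (f \<circ> k) x = Gmap L leL M leM k (fbar L leL f x)))
     \<comment> \<open>the induced monad is isomorphic to the Hoare power domain\<close>
     \<and> bij_betw (theta X) (Tobj X le) (Hobj X le)
     \<and> (\<forall>U\<in>Tobj X le. \<forall>V\<in>Tobj X le. Tord U V \<longleftrightarrow> theta X U \<subseteq> theta X V)
     \<and> (\<forall>(Y :: 'b set) leY h. is_dcpo Y leY \<longrightarrow> scott_cont X le Y leY h \<longrightarrow>
          (\<forall>U\<in>Tobj X le. theta Y (Tmap X le Y leY h U) = Hmap Y leY h (theta X U)))
     \<and> (\<forall>x\<in>X. theta X (Tunit X le x) = Hunit X le x)
     \<and> (\<forall>\<U>\<in>Tobj (Tobj X le) Tord.
          theta X (Tmult X le \<U>) =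
          Hmult X le (Hmap (Hobj X le) (\<subseteq>) (theta X) (theta (Tobj X le) \<U>)))
     \<comment> \<open>Kleisli maps correspond to predicate transformers\<close>
     \<and> (\<forall>(Y :: 'b set) leY g. is_dcpo Y leY \<longrightarrow> scott_cont X le (Hobj Y leY) (\<subseteq>) g \<longrightarrow>
          (\<forall>V\<in>opens Y leY. gbar X (opens Y leY) (\<subseteq>) (\<lambda>x. theta Y (g x)) V =
                              {x \<in> X. V \<inter> g x \<noteq> {}}))"
proof (intro conjI)
  show "\<forall>f. join_top_map L leL (opens X le) (\<subseteq>) f \<longrightarrow>
          scott_cont X le (proper L leL) (po_dual leL) (fbar L leL f) \<and>
          (\<forall>a\<in>L. gbar X L leL (fbar L leL f) a = f a)"
  proof (intro allI impI conjI ballI)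
    fix f assume J: "join_top_map L leL (opens X le) (\<subseteq>) f"
    show "scott_cont X le (proper L leL) (po_dual leL) (fbar L leL f)" by (rule fbar_cont[OF L X J])
    fix a assume a: "a \<in> L"
    show "gbar X L leL (fbar L leL f) a = f a" by (rule gbar_fbar[OF L J a])
  qed
  show "\<forall>g. scott_cont X le (proper L leL) (po_dual leL) g \<longrightarrow>
          join_top_map L leL (opens X le) (\<subseteq>) (gbar X L leL g) \<and>
          (\<forall>x\<in>X. fbar L leL (gbar X L leL g) x = g x)"
  proof (intro allI impI conjI ballI)
    fix g assume g: "scott_cont X le (proper L leL) (po_dual leL) g"
    show "join_top_map L leL (opens X le) (\<subseteq>) (gbar X L leL g)" by (rule gbar_jtm[OF L X g])
    fix x assume x: "x \<in> X"
    show "fbar L leL (gbar X L leL g) x = g x" by (rule fbar_gbar[OF L g x])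
  qed
  show "\<forall>(X' :: 'b set) le' (h :: 'b \<Rightarrow> 'a) f. is_dcpo X' le' \<longrightarrow> scott_cont X' le' X le h \<longrightarrow>
          join_top_map L leL (opens X le) (\<subseteq>) f \<longrightarrow>
          (\<forall>x\<in>X'. fbar L leL (\<lambda>a. h -` f a \<inter> X') x = fbar L leL f (h x))"
    using nat_dcpo by fast
  show "\<forall>(M :: 'm set) leM (k :: 'm \<Rightarrow> 'l) f. is_complete_lattice M leM \<longrightarrow>
          join_top_map M leM L leL k \<longrightarrow> join_top_map L leL (opens X le) (\<subseteq>) f \<longrightarrow>
          (\<forall>x\<in>X. fbar M leM (f \<circ> k) x = Gmap L leL M leM k (fbar L leL f x))"
  proof (intro allI impI ballI)
    fix M :: "'m set" and leM k f x
    assume k: "join_top_map M leM L leL k" and J: "join_top_map L leL (opens X le) (\<subseteq>) f"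
      and x: "x \<in> X"
    show "fbar M leM (f \<circ> k) x = Gmap L leL M leM k (fbar L leL f x)" by (rule nat_lat[OF L J k x])
  qed
  show "bij_betw (theta X) (Tobj X le) (Hobj X le)" by (rule theta_bij)
  show "\<forall>U\<in>Tobj X le. \<forall>V\<in>Tobj X le. Tord U V \<longleftrightarrow> theta X U \<subseteq> theta X V" by (rule Tord_iff)
  show "\<forall>(Y :: 'b set) leY h. is_dcpo Y leY \<longrightarrow> scott_cont X le Y leY h \<longrightarrow>
          (\<forall>U\<in>Tobj X le. theta Y (Tmap X le Y leY h U) = Hmap Y leY h (theta X U))"
  proof (intro allI impI ballI)
    fix Y :: "'b set" and leY h U
    assume h: "scott_cont X le Y leY h" and U: "U \<in> Tobj X le"
    show "theta Y (Tmap X le Y leY h U) = Hmap Y leY h (theta X U)" by (rule Tmap_thm[OF h U])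
  qed
  show "\<forall>x\<in>X. theta X (Tunit X le x) = Hunit X le x"
  proof
    fix x assume x: "x \<in> X"
    show "theta X (Tunit X le x) = Hunit X le x" by (rule Tunit_thm[OF X x])
  qed
  show "\<forall>\<U>\<in>Tobj (Tobj X le) Tord.
          theta X (Tmult X le \<U>) =
          Hmult X le (Hmap (Hobj X le) (\<subseteq>) (theta X) (theta (Tobj X le) \<U>))"
  proof
    fix \<U> assume U: "\<U> \<in> Tobj (Tobj X le) Tord"
    show "theta X (Tmult X le \<U>) =
          Hmult X le (Hmap (Hobj X le) (\<subseteq>) (theta X) (theta (Tobj X le) \<U>))" by (rule Tmult_thm[OF U])
  qed
  show "\<forall>(Y :: 'b set) leY g. is_dcpo Y leY \<longrightarrow> scott_cont X le (Hobj Y leY) (\<subseteq>) g \<longrightarrow>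
          (\<forall>V\<in>opens Y leY. gbar X (opens Y leY) (\<subseteq>) (\<lambda>x. theta Y (g x)) V =
                              {x \<in> X. V \<inter> g x \<noteq> {}})"
  proof (intro allI impI)
    fix Y :: "'b set" and leY g
    show "\<forall>V\<in>opens Y leY. gbar X (opens Y leY) (\<subseteq>) (\<lambda>x. theta Y (g x)) V =
                              {x \<in> X. V \<inter> g x \<noteq> {}}" by (rule kleisli_thm)
  qed
qed

end
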